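(* Let $\kappa$ be an infinite cardinal. If $G$ is a graph with at least $\kappa$ vertices and $G$ has no independent set of size $\kappa$, then $G$ is $(\kappa,\kappa)$-connected.
   Context: A graph is a pair $(V,E)$ with $E\subseteq[V]^2$; an independent set is a set of pairwise non-adjacent vertices. For infinite cardinals $\kappa,\lambda$, a graph is $(\kappa,\lambda)$-connected if after the removal of any set of fewer than $\kappa$ vertices, the number of connected components of the remaining graph is non-zero and less than $\lambda$. *)

theory Defs
  imports Main
begin

definition is_graph :: "'a set \<Rightarrow> 'a set set \<Rightarrow> bool" where
  "is_graph V E \<longleftrightarrow> (\<forall>e\<in>E. e \<subseteq> V \<and> card e = 2)"

definition independent_set :: "'a set \<Rightarrow> 'a set set \<Rightarrow> 'a set \<Rightarrow> bool" where
  "independent_set V E I \<longleftrightarrow> I \<subseteq> V \<and> (\<forall>u\<in>I. \<forall>v\<in>I. u \<noteq> v \<longrightarrow> {u, v} \<notin> E)"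

definition del_vertices :: "'a set set \<Rightarrow> 'a set \<Rightarrow> 'a set set" where
  "del_vertices E S = {e \<in> E. e \<inter> S = {}}"

definition conn_rel :: "'a set \<Rightarrow> 'a set set \<Rightarrow> ('a \<times> 'a) set" where
  "conn_rel V E = {(u, v). u \<in> V \<and> v \<in> V \<and>
      (\<lambda>x y. x \<in> V \<and> y \<in> V \<and> {x, y} \<in> E)\<^sup>*\<^sup>* u v}"

definition components :: "'a set \<Rightarrow> 'a set set \<Rightarrow> 'a set set" where
  "components V E = V // conn_rel V E"

(* (kappa,lambda)-connected (mu = lambda), with kappa, lambda given as cardinals (cardinal orders) *)
definition kl_connected :: "'a set \<Rightarrow> 'a set set \<Rightarrow> 'k rel \<Rightarrow> 'l rel \<Rightarrow> bool" where
  "kl_connected V E \<kappa> \<mu> \<longleftrightarrow>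
     (\<forall>S \<subseteq> V. ordLess2 (card_of S) \<kappa> \<longrightarrow>
        components (V - S) (del_vertices E S) \<noteq> {} \<and>
        ordLess2 (card_of (components (V - S) (del_vertices E S))) \<mu>)"

end

theory Submission
  imports Defs
begin

unbundle cardinal_syntax

lemma conn_equiv:
  assumes "\<forall>e\<in>E. e \<subseteq> W \<longrightarrow> True"
  shows "equiv W (conn_rel W E)"
proof -
  let ?P = "\<lambda>x y. x \<in> W \<and> y \<in> W \<and> {x, y} \<in> E"
  have symP: "?P\<^sup>*\<^sup>* v u" if "?P\<^sup>*\<^sup>* u v" for u v
    using that
  proof (induction rule: rtranclp_induct)
    case base then show ?case by simp
  next
    case (step y z)
    have "?P z y" using step(2) by (simp add: insert_commute)
    then show ?case by (rule converse_rtranclp_into_rtranclp[OF _ step(3)])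
  qed
  show ?thesis
    unfolding equiv_def refl_on_def sym_def trans_def conn_rel_def
    using symP by (auto intro: rtranclp_trans)
qed

theorem mainTheorem8:
  fixes V :: "'a set" and E :: "'a set set" and \<kappa> :: "'k rel"
  assumes "Card_order \<kappa>" and "BNF_Cardinal_Arithmetic.cinfinite \<kappa>"
    and "is_graph V E"
    and "ordLeq3 \<kappa> (card_of V)"
    and "\<not> (\<exists>I. independent_set V E I \<and> ordIso2 (card_of I) \<kappa>)"
  shows "kl_connected V E \<kappa> \<kappa>"
  unfolding kl_connected_def
proof (intro allI impI conjI)
  fix S assume SV: "S \<subseteq> V" and Sk: "|S| <o \<kappa>"
  let ?W = "V - S" and ?F = "del_vertices E S"
  let ?R = "conn_rel ?W ?F"
  let ?C = "components ?W ?F"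
  have eq: "equiv ?W ?R" by (rule conn_equiv) simp
  have "?W \<noteq> {}"
  proof
    assume "?W = {}"
    then have "V \<subseteq> S" by blast
    then have "|V| \<le>o |S|" by (rule card_of_mono1)
    then have "\<kappa> \<le>o |S|" using assms(4) ordLeq_transitive by blast
    then show False using Sk not_ordLess_ordLeq by blast
  qed
  then show "?C \<noteq> {}" unfolding components_def quotient_def by blast
  show "|?C| <o \<kappa>"
  proof (rule ccontr)
    assume nC: "\<not> |?C| <o \<kappa>"
    have "|?C| <o \<kappa> \<or> \<kappa> \<le>o |?C|"
      by (rule ordLess_or_ordLeq[OF card_of_Well_order card_order_on_well_order_on[OF assms(1)]])
    then have kC: "\<kappa> \<le>o |?C|"
    proof
      assume "|?C| <o \<kappa>"
      with nC show ?thesis by (rule notE)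
    qed
    have "|Field \<kappa>| =o \<kappa>" using assms(1) card_of_Field_ordIso by blast
    then have "|Field \<kappa>| \<le>o |?C|" using kC ordIso_ordLeq_trans by blast
    then have "\<exists>g. inj_on g (Field \<kappa>) \<and> g ` Field \<kappa> \<subseteq> ?C"
      by (rule card_of_ordLeq[THEN iffD2])
    then obtain g where g: "inj_on g (Field \<kappa>)" "g ` Field \<kappa> \<subseteq> ?C"
      by blast
    define f where "f X = (SOME x. x \<in> X)" for X :: "'a set"
    have fX: "f X \<in> X" if "X \<in> ?C" for X
    proof -
      have "X \<noteq> {}" using that in_quotient_imp_non_empty[OF eq] unfolding components_def by blast
      then show ?thesis unfolding f_def by (simp add: some_in_eq ex_in_conv)
    qed
    have finj: "inj_on f ?C"
    proof (rule inj_onI)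
      fix X Y assume X: "X \<in> ?C" and Y: "Y \<in> ?C" and "f X = f Y"
      then have "f X \<in> X \<inter> Y" using fX[OF X] fX[OF Y] by simp
      then show "X = Y" using quotient_disj[OF eq] X Y unfolding components_def by blast
    qed
    let ?I = "(f \<circ> g) ` Field \<kappa>"
    have "inj_on (f \<circ> g) (Field \<kappa>)"
      using g finj by (meson comp_inj_on inj_on_subset)
    then have "bij_betw (f \<circ> g) (Field \<kappa>) ?I" by (rule inj_on_imp_bij_betw)
    then have "|Field \<kappa>| =o |?I|"
      by (rule card_of_ordIso[THEN iffD1, OF exI])
    then have Ik: "|?I| =o \<kappa>"
      using \<open>|Field \<kappa>| =o \<kappa>\<close> ordIso_symmetric ordIso_transitive by blast
    have "independent_set V E ?I"
      unfolding independent_set_def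
    proof (intro conjI ballI impI)
      show "?I \<subseteq> V"
      proof
        fix x assume "x \<in> ?I"
        then obtain X where "X \<in> ?C" "x = f X" using g by auto
        then have "x \<in> ?W" using fX in_quotient_imp_subset[OF eq] unfolding components_def by blast
        then show "x \<in> V" by blast
      qed
    next
      fix u v assume "u \<in> ?I" "v \<in> ?I" "u \<noteq> v"
      then obtain X Y where X: "X \<in> ?C" "u = f X" and Y: "Y \<in> ?C" "v = f Y" using g by auto
      have uX: "u \<in> X" and vY: "v \<in> Y" using X Y fX by auto
      have uW: "u \<in> ?W" and vW: "v \<in> ?W"
        using uX vY X Y in_quotient_imp_subset[OF eq] unfolding components_def by blast+
      have XY: "X \<noteq> Y" using X Y \<open>u \<noteq> v\<close> by auto
      show "{u, v} \<notin> E"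
      proof
        assume e: "{u, v} \<in> E"
        then have "{u, v} \<in> ?F" using uW vW unfolding del_vertices_def by auto
        then have "(u, v) \<in> ?R" using uW vW unfolding conn_rel_def by auto
        then have "X = Y"
          using uX vY X(1) Y(1) eq unfolding components_def
          by (meson in_quotient_imp_closed quotient_eqI)
        then show False using XY by blast
      qed
    qed
    then show False using assms(5) Ik by blast
  qed
qed

end
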